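(* In the FAVANO process, assume each $\nabla f_i$ is $L$-Lipschitz, the stochastic gradients have bounded variance $\sigma^2$, and $\eta<\frac{1}{4LK^2}$. Then for every local step $q\in\{1,\dots,K\}$, client $i$ and time step $t\ge0$, $$\mathbb{E}\|\widetilde h^i_{t+1,q}\|^2\le\sigma^2+B^i_t,\qquad B^i_t:=\frac{\sigma^2}{K^2}+16L^2\,\mathbb{E}\|w^i_t-\mu_t\|^2+8\,\mathbb{E}\|\nabla f_i(\mu_t)\|^2 .$$
   Context: FAVANO process. Fix integers $n\ge1$, $1\le s\le n$, $K\ge1$, $d\ge1$, a step size $\eta>0$ and differentiable $f_1,\dots,f_n:\mathbb{R}^d\to\mathbb{R}$, $f=\frac1n\sum_i f_i$. All random variables live on one probability space. For each client $i$ a stochastic gradient oracle returns, at a query point $x$, $\widetilde g^i(x)=\nabla f_i(x)+\xi$ where, conditionally on everything generated before the query (including $x$), $\xi$ has mean zero (each query uses fresh noise). Initialize $w_0\in\mathbb{R}^d$ deterministic and $w_0^i=w_0$ for all $i$. For each $t\ge1$, each client $i$ and each $q\ge1$ define recursively $\widetilde h^i_{t,q}=\widetilde g^i\big(w^i_{t-1}-\eta\sum_{r=1}^{q-1}\widetilde h^i_{t,r}\big)$ and $h^i_{t,q}=\nabla f_i\big(w^i_{t-1}-\eta\sum_{r=1}^{q-1}\widetilde h^i_{t,r}\big)$. At each $t\ge1$ there are random integers $E^1_t,\dots,E^n_t\ge0$ with $\mathbf{P}(E^i_t>0)>0$, and a random subset $\mathcal{S}_t\subseteq\{1,\dots,n\}$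 uniformly distributed among subsets of size $s$; the family $(\mathcal S_t,E^1_t,\dots,E^n_t)$ is independent of all the other randomness (the past up to time $t-1$ and all $\widetilde h^i_{t,q}$), and $\mathcal S_t$ is independent of $(E^i_t)_i$. The weight $\alpha^i_t$ is either $\mathbf{P}(E^i_t>0)\,(E^i_t\wedge K)$ (stochastic version) or $\mathbb{E}[E^i_t\wedge K]$ (deterministic version), where $a\wedge b=\min(a,b)$. Set $\check h^i_t=\frac{1}{\alpha^i_t}\sum_{q=1}^{E^i_t\wedge K}\widetilde h^i_{t,q}$ if $E^i_t>0$ and $\check h^i_t=0$ otherwise. Updates: $w_t=\frac{1}{s+1}\big(w_{t-1}+\sum_{i\in\mathcal S_t}(w^i_{t-1}-\eta\check h^i_t)\big)$; $w^i_t=w_t$ for $i\in\mathcal S_t$ and $w^i_t=w^i_{t-1}$ for $i\notin\mathcal S_t$. Define $\mu_t=\frac{1}{n+1}\big(w_t+\sum_{i=1}^n w^i_t\big)$. All expectations appearing are assumed finite. Smoothness: $\|\nabla f_i(x)-\nabla f_i(y)\|\le L\|x-y\|$ for all $i,x,y$, with $L>0$. Bounded variance: conditionally on everything generated before a query at $x$, $\mathbb{E}\|\widetilde g^i(x)-\nabla f_i(x)\|^2\le\sigma^2$. *)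

theory Defs
  imports "HOL-Probability.Probability"
begin

definition rv_events :: "'a measure \<Rightarrow> 'b measure \<Rightarrow> ('a \<Rightarrow> 'b) \<Rightarrow> 'a set set" where
  "rv_events M N X = {X -` B \<inter> space M | B. B \<in> sets N}"

text \<open>Generator of the past of the FAVANO process up to time t-1:
  the sampled client sets S r, the numbers of local steps E r j and all stochastic
  gradients ht r j q, for 1 <= r < t, clients j in 1..n, local steps q >= 1.
  (w_0 is deterministic, so all models up to time t-1 are functions of these.)\<close>
definition past_gen ::
  "'a measure \<Rightarrow> nat \<Rightarrow> (nat \<Rightarrow> 'a \<Rightarrow> nat set) \<Rightarrow> (nat \<Rightarrow> nat \<Rightarrow> 'a \<Rightarrow> nat)
    \<Rightarrow> (nat \<Rightarrow> nat \<Rightarrow> nat \<Rightarrow> 'a \<Rightarrow> 'v::euclidean_space) \<Rightarrow> nat \<Rightarrow> 'a set set" where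
  "past_gen M n S E ht t =
     (\<Union>r\<in>{1..<t}. rv_events M (count_space UNIV) (S r))
   \<union> (\<Union>r\<in>{1..<t}. \<Union>j\<in>{1..n}. rv_events M (count_space UNIV) (E r j))
   \<union> (\<Union>r\<in>{1..<t}. \<Union>j\<in>{1..n}. \<Union>q\<in>{1..}. rv_events M borel (ht r j q))"

definition query_sigma ::
  "'a measure \<Rightarrow> nat \<Rightarrow> (nat \<Rightarrow> 'a \<Rightarrow> nat set) \<Rightarrow> (nat \<Rightarrow> nat \<Rightarrow> 'a \<Rightarrow> nat)
    \<Rightarrow> (nat \<Rightarrow> nat \<Rightarrow> nat \<Rightarrow> 'a \<Rightarrow> 'v::euclidean_space) \<Rightarrow> nat \<Rightarrow> nat \<Rightarrow> nat \<Rightarrow> 'a measure" where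
  "query_sigma M n S E ht t i q =
     sigma (space M) (past_gen M n S E ht t \<union> (\<Union>r\<in>{1..<q}. rv_events M borel (ht t i r)))"

definition qpt ::
  "real \<Rightarrow> (nat \<Rightarrow> nat \<Rightarrow> 'a \<Rightarrow> 'v::euclidean_space) \<Rightarrow> (nat \<Rightarrow> nat \<Rightarrow> nat \<Rightarrow> 'a \<Rightarrow> 'v)
    \<Rightarrow> nat \<Rightarrow> nat \<Rightarrow> nat \<Rightarrow> 'a \<Rightarrow> 'v" where
  "qpt eta wl ht t i q \<omega> = wl i (t - 1) \<omega> - eta *\<^sub>R (\<Sum>r\<in>{1..<q}. ht t i r \<omega>)"

definition checkh ::
  "nat \<Rightarrow> (nat \<Rightarrow> nat \<Rightarrow> 'a \<Rightarrow> real) \<Rightarrow> (nat \<Rightarrow> nat \<Rightarrow> 'a \<Rightarrow> nat)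
    \<Rightarrow> (nat \<Rightarrow> nat \<Rightarrow> nat \<Rightarrow> 'a \<Rightarrow> 'v::euclidean_space) \<Rightarrow> nat \<Rightarrow> nat \<Rightarrow> 'a \<Rightarrow> 'v" where
  "checkh K alpha E ht t i \<omega> =
     (if E t i \<omega> > 0 then (1 / alpha t i \<omega>) *\<^sub>R (\<Sum>q\<in>{1..min (E t i \<omega>) K}. ht t i q \<omega>) else 0)"

definition mu ::
  "nat \<Rightarrow> (nat \<Rightarrow> 'a \<Rightarrow> 'v::euclidean_space) \<Rightarrow> (nat \<Rightarrow> nat \<Rightarrow> 'a \<Rightarrow> 'v) \<Rightarrow> nat \<Rightarrow> 'a \<Rightarrow> 'v" where
  "mu n w wl t \<omega> = (1 / real (n + 1)) *\<^sub>R (w t \<omega> + (\<Sum>i\<in>{1..n}. wl i t \<omega>))"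

end

theory Submission
  imports Defs
begin

lemma rv_events_sets: "X \<in> measurable M N \<Longrightarrow> rv_events M N X \<subseteq> sets M"
  unfolding rv_events_def by (auto intro: measurable_sets)

lemma meas_sigma_gen:
  assumes "X \<in> measurable M N" "rv_events M N X \<subseteq> G" "G \<subseteq> Pow (space M)"
  shows "X \<in> measurable (sigma (space M) G) N"
proof (rule measurableI)
  fix x assume "x \<in> space (sigma (space M) G)"
  then have "x \<in> space M" using assms(3) by simp
  then show "X x \<in> space N" using assms(1) by (simp add: measurable_space)
next
  fix A assume A: "A \<in> sets N"
  have "X -` A \<inter> space M \<in> G" using assms(2) A unfolding rv_events_def by blast
  then show "X -` A \<inter> space (sigma (space M) G) \<in> sets (sigma (space M) G)"
    using assms(3) by (auto intro: sigma_sets.Basic)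
qed

lemma subalg_sigma:
  assumes "G \<subseteq> sets M" shows "subalgebra M (sigma (space M) G)"
proof -
  have "G \<subseteq> Pow (space M)" using assms sets.sets_into_space by blast
  then show ?thesis unfolding subalgebra_def using assms
    by (simp add: sets.sigma_sets_subset)
qed

lemma sum_subset_if: "finite B \<Longrightarrow> A \<subseteq> B \<Longrightarrow> sum f A = (\<Sum>i\<in>B. if i \<in> A then f i else 0)"
  using sum.inter_restrict[of B f A] by (simp add: Int_absorb1)

lemma wl_meas:
  fixes M :: "'a measure"
    and n s K :: nat and eta :: real
    and ht :: "nat \<Rightarrow> nat \<Rightarrow> nat \<Rightarrow> 'a \<Rightarrow> 'v::euclidean_space"
    and w :: "nat \<Rightarrow> 'a \<Rightarrow> 'v" and wl :: "nat \<Rightarrow> nat \<Rightarrow> 'a \<Rightarrow> 'v"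
    and S :: "nat \<Rightarrow> 'a \<Rightarrow> nat set" and E :: "nat \<Rightarrow> nat \<Rightarrow> 'a \<Rightarrow> nat"
    and alpha :: "nat \<Rightarrow> nat \<Rightarrow> 'a \<Rightarrow> real"
  assumes w_0: "\<And>\<omega>. w 0 \<omega> = w0" and wl_0: "\<And>i \<omega>. wl i 0 \<omega> = w0"
    and w_step: "\<And>t \<omega>. 1 \<le> t \<Longrightarrow> w t \<omega> = (1 / real (s + 1)) *\<^sub>R
        (w (t - 1) \<omega> + (\<Sum>i\<in>S t \<omega>. wl i (t - 1) \<omega> - eta *\<^sub>R checkh K alpha E ht t i \<omega>))"
    and wl_step: "\<And>t i \<omega>. 1 \<le> t \<Longrightarrow>
        wl i t \<omega> = (if i \<in> S t \<omega> then w t \<omega> else wl i (t - 1) \<omega>)"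
    and ht_meas: "\<And>t i q. ht t i q \<in> borel_measurable M"
    and E_meas: "\<And>t i. E t i \<in> measurable M (count_space UNIV)"
    and S_meas: "\<And>t. S t \<in> measurable M (count_space UNIV)"
    and S_range: "\<And>t \<omega>. 1 \<le> t \<Longrightarrow> \<omega> \<in> space M \<Longrightarrow> S t \<omega> \<subseteq> {1..n} \<and> card (S t \<omega>) = s"
    and alpha_def:
      "(\<forall>t i \<omega>. alpha t i \<omega> =
           measure M {\<omega>' \<in> space M. 0 < E t i \<omega>'} * real (min (E t i \<omega>) K))
     \<or> (\<forall>t i \<omega>. alpha t i \<omega> = integral\<^sup>L M (\<lambda>\<omega>'. real (min (E t i \<omega>') K)))"
    and G: "G \<subseteq> sets M" "past_gen M n S E ht (T+1) \<subseteq> G"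
  shows "\<forall>t \<le> T. w t \<in> borel_measurable (sigma (space M) G)
           \<and> (\<forall>i\<in>{1..n}. wl i t \<in> borel_measurable (sigma (space M) G))"
proof -
  define F where "F = sigma (space M) G"
  have Gp: "G \<subseteq> Pow (space M)" using G(1) sets.sets_into_space by blast
  have spF: "space F = space M" unfolding F_def using Gp by simp
  have Smeas: "S r \<in> measurable F (count_space UNIV)" if "1 \<le> r" "r \<le> T" for r
  proof -
    have r: "r \<in> {1..<T+1}" using that by simp
    have "rv_events M (count_space UNIV) (S r) \<subseteq> past_gen M n S E ht (T+1)"
      unfolding past_gen_def using r by blast
    then show ?thesis unfolding F_def using meas_sigma_gen[OF S_meas _ Gp] G(2) by blast
  qed
  have Emeas: "E r j \<in> measurable F (count_space UNIV)" if "1 \<le> r" "r \<le> T" "j \<in> {1..n}" for r j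
  proof -
    have r: "r \<in> {1..<T+1}" using that by simp
    have "rv_events M (count_space UNIV) (E r j) \<subseteq> past_gen M n S E ht (T+1)"
      unfolding past_gen_def using r that(3) by blast
    then show ?thesis unfolding F_def using meas_sigma_gen[OF E_meas _ Gp] G(2) by blast
  qed
  have hmeas: "ht r j q \<in> borel_measurable F" if "1 \<le> r" "r \<le> T" "j \<in> {1..n}" "1 \<le> q" for r j q
  proof -
    have r: "r \<in> {1..<T+1}" using that by simp
    have q: "q \<in> {1..}" using that by simp
    have "rv_events M borel (ht r j q) \<subseteq> past_gen M n S E ht (T+1)"
      unfolding past_gen_def using r q that(3) by blast
    then show ?thesis unfolding F_def using meas_sigma_gen[OF ht_meas _ Gp] G(2) by blast
  qed
  have alpha_meas: "alpha r j \<in> borel_measurable F" if "1 \<le> r" "r \<le> T" "j \<in> {1..n}" for r j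
    using alpha_def
  proof
    assume a: "\<forall>t i \<omega>. alpha t i \<omega> =
           measure M {\<omega>' \<in> space M. 0 < E t i \<omega>'} * real (min (E t i \<omega>) K)"
    have eq: "alpha r j = (\<lambda>\<omega>. measure M {\<omega>' \<in> space M. 0 < E r j \<omega>'} * real (min (E r j \<omega>) K))"
      using a by blast
    have "(\<lambda>\<omega>. measure M {\<omega>' \<in> space M. 0 < E r j \<omega>'} * real (min (E r j \<omega>) K)) \<in> borel_measurable F"
      by (rule measurable_compose_countable[OF _ Emeas[OF that], of "\<lambda>k \<omega>. measure M {\<omega>' \<in> space M. 0 < E r j \<omega>'} * real (min k K)"])
        (rule borel_measurable_const)
    then show ?thesis unfolding eq .
  next
    assume a: "\<forall>t i \<omega>. alpha t i \<omega> = integral\<^sup>L M (\<lambda>\<omega>'. real (min (E t i \<omega>') K))"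
    have eq: "alpha r j = (\<lambda>\<omega>. integral\<^sup>L M (\<lambda>\<omega>'. real (min (E r j \<omega>') K)))"
      using a by blast
    show ?thesis unfolding eq by (rule borel_measurable_const)
  qed
  have check_meas: "checkh K alpha E ht r j \<in> borel_measurable F" if "1 \<le> r" "r \<le> T" "j \<in> {1..n}" for r j
  proof -
    have "(\<lambda>\<omega>. (\<lambda>k \<omega>. if 0 < k then (1 / alpha r j \<omega>) *\<^sub>R (\<Sum>q\<in>{1..min k K}. ht r j q \<omega>) else 0) (E r j \<omega>) \<omega>)
       \<in> borel_measurable F"
    proof (rule measurable_compose_countable[OF _ Emeas[OF that]])
      fix k :: nat
      show "(\<lambda>\<omega>. if 0 < k then (1 / alpha r j \<omega>) *\<^sub>R (\<Sum>q\<in>{1..min k K}. ht r j q \<omega>) else 0) \<in> borel_measurable F"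
      proof (cases "0 < k")
        case True
        have "(\<lambda>\<omega>. (1 / alpha r j \<omega>) *\<^sub>R (\<Sum>q\<in>{1..min k K}. ht r j q \<omega>)) \<in> borel_measurable F"
          by (intro borel_measurable_scaleR borel_measurable_divide borel_measurable_const alpha_meas[OF that] borel_measurable_sum hmeas[OF that]) auto
        then show ?thesis using True by simp
      next
        case False then show ?thesis by simp
      qed
    qed
    then show ?thesis unfolding checkh_def[abs_def] by simp
  qed
  have "w t \<in> borel_measurable F \<and> (\<forall>i\<in>{1..n}. wl i t \<in> borel_measurable F)" if "t \<le> T" for t
    using that
  proof (induction t)
    case 0
    then show ?case using w_0 wl_0 by simp
  next
    case (Suc t)
    then have IH: "w t \<in> borel_measurable F" "\<And>i. i\<in>{1..n} \<Longrightarrow> wl i t \<in> borel_measurable F" by auto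
    have SS: "1 \<le> Suc t" "Suc t \<le> T" using Suc by auto
    have pred: "{\<omega> \<in> space F. i \<in> S (Suc t) \<omega>} \<in> sets F" for i
    proof -
      have "{\<omega> \<in> space F. i \<in> S (Suc t) \<omega>} = S (Suc t) -` {A. i \<in> A} \<inter> space F" by auto
      then show ?thesis using measurable_sets[OF Smeas[OF SS], of "{A. i \<in> A}"] by simp
    qed
    have wS: "w (Suc t) \<in> borel_measurable F"
    proof -
      define Wf where "Wf = (\<lambda>\<omega>. (1 / real (s + 1)) *\<^sub>R (w t \<omega> + (\<Sum>i\<in>{1..n}. if i \<in> S (Suc t) \<omega> then
          wl i t \<omega> - eta *\<^sub>R checkh K alpha E ht (Suc t) i \<omega> else 0)))"
      have eq: "w (Suc t) \<omega> = Wf \<omega>" if "\<omega> \<in> space F" for \<omega>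
      proof -
        have "S (Suc t) \<omega> = {1..n} \<inter> {i. i \<in> S (Suc t) \<omega>}" using S_range[of "Suc t" \<omega>] that spF by auto
        then have "(\<Sum>i\<in>S (Suc t) \<omega>. wl i t \<omega> - eta *\<^sub>R checkh K alpha E ht (Suc t) i \<omega>)
          = (\<Sum>i\<in>{1..n}. if i \<in> S (Suc t) \<omega> then
          wl i t \<omega> - eta *\<^sub>R checkh K alpha E ht (Suc t) i \<omega> else 0)"
          using sum_subset_if[of "{1..n}" "S (Suc t) \<omega>" "\<lambda>i. wl i t \<omega> - eta *\<^sub>R checkh K alpha E ht (Suc t) i \<omega>"]
            S_range[of "Suc t" \<omega>] that spF by simp
        then show ?thesis using w_step[of "Suc t" \<omega>] unfolding Wf_def by simp
      qed
      have term_i: "(\<lambda>\<omega>. if i \<in> S (Suc t) \<omega> then wl i t \<omega> - eta *\<^sub>R checkh K alpha E ht (Suc t) i \<omega> else 0)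
          \<in> borel_measurable F" if "i \<in> {1..n}" for i
        by (rule measurable_If[OF _ borel_measurable_const pred])
          (intro borel_measurable_diff borel_measurable_scaleR borel_measurable_const IH(2)[OF that] check_meas[OF SS that])
      have "Wf \<in> borel_measurable F"
        unfolding Wf_def
        by (intro borel_measurable_scaleR borel_measurable_const borel_measurable_add IH(1) borel_measurable_sum term_i)
      moreover have "w (Suc t) \<in> borel_measurable F \<longleftrightarrow> Wf \<in> borel_measurable F"
        by (rule measurable_cong) (rule eq)
      ultimately show ?thesis by simp
    qed
    have "wl i (Suc t) \<in> borel_measurable F" if "i \<in> {1..n}" for i
    proof -
      have "(\<lambda>\<omega>. if i \<in> S (Suc t) \<omega> then w (Suc t) \<omega> else wl i t \<omega>) \<in> borel_measurable F"
        by (rule measurable_If[OF wS IH(2)[OF that] pred])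
      moreover have "wl i (Suc t) = (\<lambda>\<omega>. if i \<in> S (Suc t) \<omega> then w (Suc t) \<omega> else wl i t \<omega>)"
        using wl_step[of "Suc t" i] by auto
      ultimately show ?thesis by simp
    qed
    then show ?case using wS by blast
  qed
  then show ?thesis unfolding F_def by blast
qed


lemma div_le_self': "0 \<le> x \<Longrightarrow> 1 \<le> y \<Longrightarrow> x / y \<le> (x::real)"
proof -
  assume x: "0 \<le> x" and y: "1 \<le> y"
  have "x * 1 \<le> x * y" using mult_left_mono[OF y x] .
  then show ?thesis using y by (simp add: divide_le_eq)
qed

lemma final_arith:
  fixes k eta L D G m Ssum A Xi H X sgm :: real
  assumes k: "1 \<le> k" and eta: "0 < eta" and L: "0 < L" and es: "eta < 1 / (4 * L * k ^ 2)"
    and D: "0 \<le> D" and G: "0 \<le> G" and m: "0 \<le> m" "m \<le> k" and s: "0 \<le> sgm"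
    and Ss: "Ssum \<le> m * A"
    and A: "A = sgm + (sgm / k ^ 2 + 16 * L\<^sup>2 * D + 8 * G)"
    and Xi: "Xi \<le> sgm" and H: "H \<le> 3 * L\<^sup>2 * D + 3 * L\<^sup>2 * eta\<^sup>2 * (m * Ssum) + 3 * G"
    and X: "X = Xi + H"
  shows "X \<le> A"
proof -
  have k2: "1 \<le> k^2" using k by (simp add: one_le_power)
  have kp: "0 < k^2" using k by (simp add: zero_less_power)
  have A0: "0 \<le> A" using A s D G kp by (simp add: add_nonneg_nonneg)
  have "eta * L * k^2 < 1/4"
  proof -
    have "eta * (4 * L * k^2) < 1" using es L kp by (simp add: field_simps)
    then show ?thesis by (simp add: field_simps)
  qed
  moreover have "0 \<le> eta * L * k^2" using eta L kp by simp
  ultimately have c: "(eta * L * k^2)^2 \<le> 1/16"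
    using mult_mono[of "eta * L * k^2" "1/4" "eta * L * k^2" "1/4"] by (simp add: power2_eq_square)
  have ms: "m * Ssum \<le> k^2 * A"
  proof -
    have "m * Ssum \<le> m * (m * A)" using Ss m by (simp add: mult_left_mono)
    also have "\<dots> = (m*m) * A" by simp
    also have "\<dots> \<le> k^2 * A" using A0 m by (intro mult_right_mono) (auto simp: power2_eq_square intro: mult_mono)
    finally show ?thesis .
  qed
  have "3 * L\<^sup>2 * eta\<^sup>2 * (m * Ssum) \<le> 3 * L\<^sup>2 * eta\<^sup>2 * (k^2 * A)"
    using ms by (simp add: mult_left_mono)
  also have "\<dots> = 3 * (eta * L * k^2)^2 * (A / k^2)" using kp by (simp add: field_simps power2_eq_square)
  also have "\<dots> \<le> 3 * (1/16) * (A / k^2)"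
    using c A0 kp by (intro mult_right_mono mult_left_mono) auto
  also have "A / k^2 \<le> 2 * sgm / k^2 + 16 * L\<^sup>2 * D + 8 * G"
  proof -
    have "A / k^2 = sgm / k^2 + (sgm / k^2) / k^2 + (16 * L\<^sup>2 * D + 8 * G) / k^2"
      using A by (simp add: add_divide_distrib)
    moreover have "(sgm / k^2) / k^2 \<le> sgm / k^2"
      using k2 s kp by (intro div_le_self') simp_all
    moreover have "(16 * L\<^sup>2 * D + 8 * G) / k^2 \<le> 16 * L\<^sup>2 * D + 8 * G"
      using k2 D G by (intro div_le_self') simp_all
    ultimately show ?thesis by linarith
  qed
  then have "3 * (1/16) * (A / k^2) \<le> 3 * (1/16) * (2 * sgm / k^2 + 16 * L\<^sup>2 * D + 8 * G)" by simp
  finally have HH: "3 * L\<^sup>2 * eta\<^sup>2 * (m * Ssum) \<le> 3 * (1/16) * (2 * sgm / k^2 + 16 * L\<^sup>2 * D + 8 * G)" .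
  have LD: "0 \<le> L\<^sup>2 * D" using D by simp
  have sk: "0 \<le> sgm / k^2" using s kp by simp
  show ?thesis using X Xi H HH A LD sk G by (simp add: field_simps) linarith
qed

lemma sq3:
  fixes u v z :: real
  shows "(u + v + z)\<^sup>2 \<le> 3 * u\<^sup>2 + 3 * v\<^sup>2 + 3 * z\<^sup>2"
proof -
  have "0 \<le> (u - v)\<^sup>2 + (v - z)\<^sup>2 + (u - z)\<^sup>2" by simp
  then show ?thesis by (simp add: power2_eq_square algebra_simps)
qed

lemma sq2:
  fixes x y :: real
  shows "(x + y)\<^sup>2 \<le> 2 * x\<^sup>2 + 2 * y\<^sup>2"
proof -
  have "0 \<le> (x - y)\<^sup>2" by simp
  moreover have "(x - y)\<^sup>2 = x\<^sup>2 - 2 * (x * y) + y\<^sup>2" by (simp add: power2_diff)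
  moreover have "(x + y)\<^sup>2 = x\<^sup>2 + 2 * (x * y) + y\<^sup>2" by (simp add: power2_sum)
  ultimately show ?thesis by linarith
qed

lemma norm_add_sq:
  fixes x y :: "'v::real_inner"
  shows "(norm (x + y))\<^sup>2 = (norm x)\<^sup>2 + (norm y)\<^sup>2 + 2 * (y \<bullet> x)"
  by (simp add: power2_norm_eq_inner inner_add_left inner_add_right inner_commute[of x y])

lemma prod_bound:
  fixes a c p r :: real
  assumes "\<bar>a\<bar> \<le> p" "\<bar>c\<bar> \<le> r"
  shows "\<bar>a * c\<bar> \<le> p\<^sup>2 + r\<^sup>2"
proof -
  have "\<bar>a * c\<bar> = \<bar>a\<bar> * \<bar>c\<bar>" by (simp add: abs_mult)
  also have "\<dots> \<le> p * r" using assms by (intro mult_mono) auto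
  also have "\<dots> \<le> p\<^sup>2 + r\<^sup>2"
  proof -
    have p0: "0 \<le> p" "0 \<le> r" using assms abs_ge_zero order_trans by blast+
    have "0 \<le> (p - r)\<^sup>2" by simp
    moreover have "(p - r)\<^sup>2 = p\<^sup>2 - 2 * (p * r) + r\<^sup>2" by (simp add: power2_diff)
    moreover have "0 \<le> p * r" using p0 by simp
    ultimately show ?thesis by linarith
  qed
  finally show ?thesis .
qed

theorem mainTheorem6:
  fixes M :: "'a measure"
    and n s K :: nat and eta L sigma :: real
    and f :: "nat \<Rightarrow> 'v::euclidean_space \<Rightarrow> real" and g :: "nat \<Rightarrow> 'v \<Rightarrow> 'v"
    and F :: "'v \<Rightarrow> real" and w0 :: 'v
    and ht :: "nat \<Rightarrow> nat \<Rightarrow> nat \<Rightarrow> 'a \<Rightarrow> 'v"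
    and w :: "nat \<Rightarrow> 'a \<Rightarrow> 'v" and wl :: "nat \<Rightarrow> nat \<Rightarrow> 'a \<Rightarrow> 'v"
    and S :: "nat \<Rightarrow> 'a \<Rightarrow> nat set" and E :: "nat \<Rightarrow> nat \<Rightarrow> 'a \<Rightarrow> nat"
    and alpha :: "nat \<Rightarrow> nat \<Rightarrow> 'a \<Rightarrow> real"
  assumes P: "prob_space M"
    and n: "1 \<le> n" and s: "1 \<le> s" "s \<le> n" and K: "1 \<le> K" and eta: "0 < eta"
    \<comment> \<open>g i is the gradient of the differentiable f i; F is the average\<close>
    and grad: "\<And>i x. i \<in> {1..n} \<Longrightarrow> (f i has_derivative (\<lambda>h. g i x \<bullet> h)) (at x)"
    and Fdef: "\<And>x. F x = (1 / real n) * (\<Sum>i\<in>{1..n}. f i x)"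
    \<comment> \<open>process\<close>
    and w_0: "\<And>\<omega>. w 0 \<omega> = w0" and wl_0: "\<And>i \<omega>. wl i 0 \<omega> = w0"
    and w_step: "\<And>t \<omega>. 1 \<le> t \<Longrightarrow> w t \<omega> = (1 / real (s + 1)) *\<^sub>R
        (w (t - 1) \<omega> + (\<Sum>i\<in>S t \<omega>. wl i (t - 1) \<omega> - eta *\<^sub>R checkh K alpha E ht t i \<omega>))"
    and wl_step: "\<And>t i \<omega>. 1 \<le> t \<Longrightarrow>
        wl i t \<omega> = (if i \<in> S t \<omega> then w t \<omega> else wl i (t - 1) \<omega>)"
    \<comment> \<open>random quantities and their laws\<close>
    and ht_meas: "\<And>t i q. ht t i q \<in> borel_measurable M"
    and E_meas: "\<And>t i. E t i \<in> measurable M (count_space UNIV)"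
    and S_meas: "\<And>t. S t \<in> measurable M (count_space UNIV)"
    and E_pos: "\<And>t i. 1 \<le> t \<Longrightarrow> i \<in> {1..n} \<Longrightarrow>
        measure M {\<omega> \<in> space M. 0 < E t i \<omega>} > 0"
    and S_range: "\<And>t \<omega>. 1 \<le> t \<Longrightarrow> \<omega> \<in> space M \<Longrightarrow> S t \<omega> \<subseteq> {1..n} \<and> card (S t \<omega>) = s"
    and S_unif: "\<And>t A. 1 \<le> t \<Longrightarrow> A \<subseteq> {1..n} \<Longrightarrow> card A = s \<Longrightarrow>
        measure M {\<omega> \<in> space M. S t \<omega> = A} = 1 / real (n choose s)"
    and indep_new: "\<And>t. 1 \<le> t \<Longrightarrow> prob_space.indep_set M
        (sigma_sets (space M) (rv_events M (count_space UNIV) (S t)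
            \<union> (\<Union>j\<in>{1..n}. rv_events M (count_space UNIV) (E t j))))
        (sigma_sets (space M) (past_gen M n S E ht t
            \<union> (\<Union>j\<in>{1..n}. \<Union>q\<in>{1..}. rv_events M borel (ht t j q))))"
    and indep_SE: "\<And>t. 1 \<le> t \<Longrightarrow> prob_space.indep_set M
        (sigma_sets (space M) (rv_events M (count_space UNIV) (S t)))
        (sigma_sets (space M) (\<Union>j\<in>{1..n}. rv_events M (count_space UNIV) (E t j)))"
    and alpha_def:
      "(\<forall>t i \<omega>. alpha t i \<omega> =
           measure M {\<omega>' \<in> space M. 0 < E t i \<omega>'} * real (min (E t i \<omega>) K))
     \<or> (\<forall>t i \<omega>. alpha t i \<omega> = integral\<^sup>L M (\<lambda>\<omega>'. real (min (E t i \<omega>') K)))"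
    \<comment> \<open>stochastic oracle: conditionally unbiased noise with bounded conditional variance\<close>
    and noise_int: "\<And>t i q. 1 \<le> t \<Longrightarrow> i \<in> {1..n} \<Longrightarrow> 1 \<le> q \<Longrightarrow>
        integrable M (\<lambda>\<omega>. (norm (ht t i q \<omega> - g i (qpt eta wl ht t i q \<omega>)))\<^sup>2)"
    and noise_mean: "\<And>t i q b. 1 \<le> t \<Longrightarrow> i \<in> {1..n} \<Longrightarrow> 1 \<le> q \<Longrightarrow> b \<in> Basis \<Longrightarrow>
        AE \<omega> in M. real_cond_exp M (query_sigma M n S E ht t i q)
          (\<lambda>\<omega>. (ht t i q \<omega> - g i (qpt eta wl ht t i q \<omega>)) \<bullet> b) \<omega> = 0"
    and noise_var: "\<And>t i q. 1 \<le> t \<Longrightarrow> i \<in> {1..n} \<Longrightarrow> 1 \<le> q \<Longrightarrow>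
        AE \<omega> in M. real_cond_exp M (query_sigma M n S E ht t i q)
          (\<lambda>\<omega>. (norm (ht t i q \<omega> - g i (qpt eta wl ht t i q \<omega>)))\<^sup>2) \<omega> \<le> sigma\<^sup>2"
    \<comment> \<open>finiteness of the expectations appearing\<close>
    and int_h: "\<And>t i q. integrable M (\<lambda>\<omega>. (norm (ht t i q \<omega>))\<^sup>2)"
    and int_dev: "\<And>t i. integrable M (\<lambda>\<omega>. (norm (wl i t \<omega> - mu n w wl t \<omega>))\<^sup>2)"
    and int_grad: "\<And>t i. integrable M (\<lambda>\<omega>. (norm (g i (mu n w wl t \<omega>)))\<^sup>2)"
    \<comment> \<open>smoothness and step size\<close>
    and L: "0 < L"
    and lip: "\<And>i x y. i \<in> {1..n} \<Longrightarrow> norm (g i x - g i y) \<le> L * norm (x - y)"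
    and eta_small: "eta < 1 / (4 * L * real K ^ 2)"
  shows "\<forall>q \<in> {1..K}. \<forall>i \<in> {1..n}. \<forall>t.
    integral\<^sup>L M (\<lambda>\<omega>. (norm (ht (t + 1) i q \<omega>))\<^sup>2)
      \<le> sigma\<^sup>2 + (sigma\<^sup>2 / real K ^ 2
          + 16 * L\<^sup>2 * integral\<^sup>L M (\<lambda>\<omega>. (norm (wl i t \<omega> - mu n w wl t \<omega>))\<^sup>2)
          + 8 * integral\<^sup>L M (\<lambda>\<omega>. (norm (g i (mu n w wl t \<omega>)))\<^sup>2))"
proof (intro ballI allI)
  fix q i t assume q: "q \<in> {1..K}" and i: "i \<in> {1..n}"
  interpret prob_space M by (rule P)
  define D where "D = integral\<^sup>L M (\<lambda>\<omega>. (norm (wl i t \<omega> - mu n w wl t \<omega>))\<^sup>2)"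
  define Gm where "Gm = integral\<^sup>L M (\<lambda>\<omega>. (norm (g i (mu n w wl t \<omega>)))\<^sup>2)"
  define A where "A = sigma\<^sup>2 + (sigma\<^sup>2 / real K ^ 2 + 16 * L\<^sup>2 * D + 8 * Gm)"
  have D0: "0 \<le> D" unfolding D_def by (rule integral_nonneg_AE) simp
  have G0: "0 \<le> Gm" unfolding Gm_def by (rule integral_nonneg_AE) simp
  have gcont: "continuous_on UNIV (g i)"
  proof (rule lipschitz_on_continuous_on)
    show "L-lipschitz_on UNIV (g i)" unfolding lipschitz_on_def
      using L lip[OF i] by (simp add: dist_norm)
  qed
  have past_sets: "past_gen M n S E ht T \<subseteq> sets M" for T
    unfolding past_gen_def using rv_events_sets[OF S_meas] rv_events_sets[OF E_meas] rv_events_sets[OF ht_meas]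
    by blast
  have main: "q \<in> {1..K} \<longrightarrow> integral\<^sup>L M (\<lambda>\<omega>. (norm (ht (t + 1) i q \<omega>))\<^sup>2) \<le> A" for q
  proof (induction q rule: less_induct)
    case (less q)
    show ?case
    proof
      assume q: "q \<in> {1..K}"
      have IH: "integral\<^sup>L M (\<lambda>\<omega>. (norm (ht (t + 1) i r \<omega>))\<^sup>2) \<le> A" if "r \<in> {1..<q}" for r
        using less.IH[of r] that q by auto
      define Gen where "Gen = past_gen M n S E ht (t+1) \<union> (\<Union>r\<in>{1..<q}. rv_events M borel (ht (t+1) i r))"
      define Qs where "Qs = query_sigma M n S E ht (t+1) i q"
      have Qs_def': "Qs = measure_of (space M) Gen (\<lambda>x. 0)" unfolding Qs_def Gen_def query_sigma_def ..
      have GenM: "Gen \<subseteq> sets M" unfolding Gen_def using past_sets rv_events_sets[OF ht_meas] by blast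
      have GenP: "Gen \<subseteq> Pow (space M)" using GenM sets.sets_into_space by blast
      have subQ: "subalgebra M Qs" unfolding Qs_def' by (rule subalg_sigma[OF GenM])
      interpret FS: finite_measure_subalgebra M Qs
        by (simp add: finite_measure_subalgebra_def finite_measure_subalgebra_axioms_def finite_measure_axioms subQ)
      have wlQ: "wl i t \<in> borel_measurable Qs"
        using wl_meas[of w w0 wl s eta K alpha E ht S M n Gen t, OF w_0 wl_0 w_step wl_step ht_meas E_meas S_meas S_range alpha_def GenM]
          i unfolding Qs_def' Gen_def by blast
      have htQ: "ht (t+1) i r \<in> borel_measurable Qs" if "r \<in> {1..<q}" for r
      proof -
        have "rv_events M borel (ht (t+1) i r) \<subseteq> Gen" unfolding Gen_def using that by blast
        then show ?thesis unfolding Qs_def' using meas_sigma_gen[OF ht_meas _ GenP] by blast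
      qed
      have xeq: "qpt eta wl ht (t+1) i q = (\<lambda>\<omega>. wl i t \<omega> - eta *\<^sub>R (\<Sum>r\<in>{1..<q}. ht (t+1) i r \<omega>))"
        by (simp add: qpt_def[abs_def])
      have xQ: "qpt eta wl ht (t+1) i q \<in> borel_measurable Qs"
        unfolding xeq by (intro borel_measurable_diff borel_measurable_scaleR borel_measurable_const wlQ borel_measurable_sum htQ)
      have hhQ: "(\<lambda>\<omega>. g i (qpt eta wl ht (t+1) i q \<omega>)) \<in> borel_measurable Qs"
        by (rule borel_measurable_continuous_on[OF gcont xQ])
      have hhM: "(\<lambda>\<omega>. g i (qpt eta wl ht (t+1) i q \<omega>)) \<in> borel_measurable M"
        by (rule measurable_from_subalg[OF subQ hhQ])
      have t1: "1 \<le> t + 1" by simp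
      have q1: "1 \<le> q" using q by simp
      let ?hh = "\<lambda>\<omega>. g i (qpt eta wl ht (t+1) i q \<omega>)"
      let ?xi = "\<lambda>\<omega>. ht (t+1) i q \<omega> - g i (qpt eta wl ht (t+1) i q \<omega>)"
      have xiM: "?xi \<in> borel_measurable M" using hhM ht_meas by measurable
      have int_xi: "integrable M (\<lambda>\<omega>. (norm (?xi \<omega>))\<^sup>2)" by (rule noise_int[OF t1 i q1])
      have int_ht: "integrable M (\<lambda>\<omega>. (norm (ht (t+1) i q \<omega>))\<^sup>2)" by (rule int_h)
      have int_hh: "integrable M (\<lambda>\<omega>. (norm (?hh \<omega>))\<^sup>2)"
      proof (rule Bochner_Integration.integrable_bound[OF Bochner_Integration.integrable_add[OF integrable_mult_right[OF int_ht, of 2] integrable_mult_right[OF int_xi, of 2]]])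
        show "(\<lambda>\<omega>. (norm (?hh \<omega>))\<^sup>2) \<in> borel_measurable M" using hhM by measurable
        show "AE \<omega> in M. norm ((norm (?hh \<omega>))\<^sup>2) \<le> norm (2 * (norm (ht (t+1) i q \<omega>))\<^sup>2 + 2 * (norm (?xi \<omega>))\<^sup>2)"
        proof (rule AE_I2)
          fix \<omega>
          have "norm (?hh \<omega>) \<le> norm (ht (t+1) i q \<omega>) + norm (?xi \<omega>)"
            using norm_triangle_ineq4[of "ht (t+1) i q \<omega>" "?xi \<omega>"] by simp
          then have "(norm (?hh \<omega>))\<^sup>2 \<le> (norm (ht (t+1) i q \<omega>) + norm (?xi \<omega>))\<^sup>2"
            by (simp add: power_mono)
          also have "\<dots> \<le> 2 * (norm (ht (t+1) i q \<omega>))\<^sup>2 + 2 * (norm (?xi \<omega>))\<^sup>2"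
            using sq2[of "norm (ht (t+1) i q \<omega>)" "norm (?xi \<omega>)"] .
          finally show "norm ((norm (?hh \<omega>))\<^sup>2) \<le> norm (2 * (norm (ht (t+1) i q \<omega>))\<^sup>2 + 2 * (norm (?xi \<omega>))\<^sup>2)"
            by simp
        qed
      qed
      have int_prod: "integrable M (\<lambda>\<omega>. (?hh \<omega> \<bullet> b) * (?xi \<omega> \<bullet> b))" if b: "b \<in> Basis" for b
      proof (rule Bochner_Integration.integrable_bound[OF Bochner_Integration.integrable_add[OF int_hh int_xi]])
        show "(\<lambda>\<omega>. (?hh \<omega> \<bullet> b) * (?xi \<omega> \<bullet> b)) \<in> borel_measurable M" using hhM xiM by measurable
        show "AE \<omega> in M. norm ((?hh \<omega> \<bullet> b) * (?xi \<omega> \<bullet> b)) \<le> norm ((norm (?hh \<omega>))\<^sup>2 + (norm (?xi \<omega>))\<^sup>2)"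
        proof (rule AE_I2)
          fix \<omega>
          show "norm ((?hh \<omega> \<bullet> b) * (?xi \<omega> \<bullet> b)) \<le> norm ((norm (?hh \<omega>))\<^sup>2 + (norm (?xi \<omega>))\<^sup>2)"
            using prod_bound[OF Basis_le_norm[OF b, of "?hh \<omega>"] Basis_le_norm[OF b, of "?xi \<omega>"]] by simp
        qed
      qed
      have cross: "integral\<^sup>L M (\<lambda>\<omega>. (?hh \<omega> \<bullet> b) * (?xi \<omega> \<bullet> b)) = 0" if b: "b \<in> Basis" for b
      proof -
        have hbQ: "(\<lambda>\<omega>. ?hh \<omega> \<bullet> b) \<in> borel_measurable Qs" using hhQ by measurable
        have xbM: "(\<lambda>\<omega>. ?xi \<omega> \<bullet> b) \<in> borel_measurable M" using xiM by measurable
        have "integral\<^sup>L M (\<lambda>\<omega>. (?hh \<omega> \<bullet> b) * real_cond_exp M Qs (\<lambda>\<omega>. ?xi \<omega> \<bullet> b) \<omega>)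
            = integral\<^sup>L M (\<lambda>\<omega>. (?hh \<omega> \<bullet> b) * (?xi \<omega> \<bullet> b))"
          by (rule FS.real_cond_exp_intg(2)[OF int_prod[OF b] hbQ xbM])
        moreover have "integral\<^sup>L M (\<lambda>\<omega>. (?hh \<omega> \<bullet> b) * real_cond_exp M Qs (\<lambda>\<omega>. ?xi \<omega> \<bullet> b) \<omega>) = 0"
        proof (rule integral_eq_zero_AE)
          show "AE \<omega> in M. (?hh \<omega> \<bullet> b) * real_cond_exp M Qs (\<lambda>\<omega>. ?xi \<omega> \<bullet> b) \<omega> = 0"
            using noise_mean[OF t1 i q1 b] unfolding Qs_def by eventually_elim simp
        qed
        ultimately show ?thesis by simp
      qed
      have decomp: "(norm (ht (t+1) i q \<omega>))\<^sup>2 = (norm (?xi \<omega>))\<^sup>2 + (norm (?hh \<omega>))\<^sup>2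
           + 2 * (\<Sum>b\<in>Basis. (?hh \<omega> \<bullet> b) * (?xi \<omega> \<bullet> b))" for \<omega>
      proof -
        have "ht (t+1) i q \<omega> = ?xi \<omega> + ?hh \<omega>" by simp
        then have p: "(norm (ht (t+1) i q \<omega>))\<^sup>2 = (norm (?xi \<omega>))\<^sup>2 + (norm (?hh \<omega>))\<^sup>2 + 2 * (?hh \<omega> \<bullet> ?xi \<omega>)"
          using norm_add_sq[of "?xi \<omega>" "?hh \<omega>"] by (simp only: diff_add_cancel)
        show ?thesis by (subst p) (subst euclidean_inner[of "?hh \<omega>" "?xi \<omega>"], rule refl)
      qed
      have Xeq: "integral\<^sup>L M (\<lambda>\<omega>. (norm (ht (t+1) i q \<omega>))\<^sup>2)
          = integral\<^sup>L M (\<lambda>\<omega>. (norm (?xi \<omega>))\<^sup>2) + integral\<^sup>L M (\<lambda>\<omega>. (norm (?hh \<omega>))\<^sup>2)"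
      proof -
        have "integral\<^sup>L M (\<lambda>\<omega>. (norm (ht (t+1) i q \<omega>))\<^sup>2)
           = integral\<^sup>L M (\<lambda>\<omega>. (norm (?xi \<omega>))\<^sup>2 + (norm (?hh \<omega>))\<^sup>2
           + 2 * (\<Sum>b\<in>Basis. (?hh \<omega> \<bullet> b) * (?xi \<omega> \<bullet> b)))"
          by (simp only: decomp)
        also have "\<dots> = integral\<^sup>L M (\<lambda>\<omega>. (norm (?xi \<omega>))\<^sup>2) + integral\<^sup>L M (\<lambda>\<omega>. (norm (?hh \<omega>))\<^sup>2)
           + 2 * (\<Sum>b\<in>Basis. integral\<^sup>L M (\<lambda>\<omega>. (?hh \<omega> \<bullet> b) * (?xi \<omega> \<bullet> b)))"
          using int_xi int_hh int_prod
          by (simp add: integral_add integral_mult_right integral_sum integrable_sum)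
        also have "\<dots> = integral\<^sup>L M (\<lambda>\<omega>. (norm (?xi \<omega>))\<^sup>2) + integral\<^sup>L M (\<lambda>\<omega>. (norm (?hh \<omega>))\<^sup>2)"
          using cross by simp
        finally show ?thesis .
      qed
      have Xi_le: "integral\<^sup>L M (\<lambda>\<omega>. (norm (?xi \<omega>))\<^sup>2) \<le> sigma\<^sup>2"
      proof -
        have "integral\<^sup>L M (\<lambda>\<omega>. (norm (?xi \<omega>))\<^sup>2) = integral\<^sup>L M (real_cond_exp M Qs (\<lambda>\<omega>. (norm (?xi \<omega>))\<^sup>2))"
          using FS.real_cond_exp_int(2)[OF int_xi] by simp
        also have "\<dots> \<le> integral\<^sup>L M (\<lambda>\<omega>. sigma\<^sup>2)"
          by (rule integral_mono_AE[OF FS.real_cond_exp_int(1)[OF int_xi] integrable_const])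
            (use noise_var[OF t1 i q1] in \<open>simp add: Qs_def\<close>)
        also have "\<dots> = sigma\<^sup>2" by (simp add: prob_space)
        finally show ?thesis .
      qed
      define m where "m = real (q - 1)"
      define Ssum where "Ssum = (\<Sum>r\<in>{1..<q}. integral\<^sup>L M (\<lambda>\<omega>. (norm (ht (t + 1) i r \<omega>))\<^sup>2))"
      have Ss: "Ssum \<le> m * A"
      proof -
        have "Ssum \<le> of_nat (card {1..<q}) * A" unfolding Ssum_def by (rule sum_bounded_above) (rule IH)
        then show ?thesis unfolding m_def by simp
      qed
      have pw: "(norm (?hh \<omega>))\<^sup>2 \<le> 3 * L\<^sup>2 * (norm (wl i t \<omega> - mu n w wl t \<omega>))\<^sup>2
          + 3 * L\<^sup>2 * eta\<^sup>2 * (m * (\<Sum>r\<in>{1..<q}. (norm (ht (t + 1) i r \<omega>))\<^sup>2))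
          + 3 * (norm (g i (mu n w wl t \<omega>)))\<^sup>2" for \<omega>
      proof -
        let ?a = "norm (wl i t \<omega> - mu n w wl t \<omega>)"
        let ?c = "norm (\<Sum>r\<in>{1..<q}. ht (t + 1) i r \<omega>)"
        let ?d = "norm (g i (mu n w wl t \<omega>))"
        have xw: "qpt eta wl ht (t+1) i q \<omega> - mu n w wl t \<omega> = (wl i t \<omega> - mu n w wl t \<omega>) - eta *\<^sub>R (\<Sum>r\<in>{1..<q}. ht (t+1) i r \<omega>)"
          unfolding xeq by simp
        have "norm (qpt eta wl ht (t+1) i q \<omega> - mu n w wl t \<omega>) \<le> ?a + eta * ?c"
          unfolding xw using norm_triangle_ineq4[of "wl i t \<omega> - mu n w wl t \<omega>" "eta *\<^sub>R (\<Sum>r\<in>{1..<q}. ht (t+1) i r \<omega>)"] eta by simp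
        then have "L * norm (qpt eta wl ht (t+1) i q \<omega> - mu n w wl t \<omega>) \<le> L * (?a + eta * ?c)"
          by (rule mult_left_mono[OF _ less_imp_le[OF L]])
        then have h2: "L * norm (qpt eta wl ht (t+1) i q \<omega> - mu n w wl t \<omega>) \<le> L * ?a + L * eta * ?c"
          by (simp add: distrib_left mult.assoc)
        have "norm (?hh \<omega>) \<le> norm (g i (mu n w wl t \<omega>)) + norm (?hh \<omega> - g i (mu n w wl t \<omega>))"
          by (rule norm_triangle_sub)
        also have "norm (?hh \<omega> - g i (mu n w wl t \<omega>)) \<le> L * norm (qpt eta wl ht (t+1) i q \<omega> - mu n w wl t \<omega>)"
          by (rule lip[OF i])
        finally have h3: "norm (?hh \<omega>) \<le> L * ?a + L * eta * ?c + ?d" using h2 by linarith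
        have h4: "(norm (?hh \<omega>))\<^sup>2 \<le> (L * ?a + L * eta * ?c + ?d)\<^sup>2"
          by (rule power_mono[OF h3]) simp
        have h5: "(L * ?a + L * eta * ?c + ?d)\<^sup>2 \<le> 3 * (L * ?a)\<^sup>2 + 3 * (L * eta * ?c)\<^sup>2 + 3 * ?d\<^sup>2"
          by (rule sq3)
        have h6: "?c\<^sup>2 \<le> m * (\<Sum>r\<in>{1..<q}. (norm (ht (t + 1) i r \<omega>))\<^sup>2)"
        proof -
          have "?c \<le> (\<Sum>r\<in>{1..<q}. norm (ht (t + 1) i r \<omega>))" by (rule norm_sum)
          then have "?c\<^sup>2 \<le> (\<Sum>r\<in>{1..<q}. norm (ht (t + 1) i r \<omega>))\<^sup>2"
            by (rule power_mono) simp
          also have "\<dots> \<le> (\<Sum>r\<in>{1..<q}. (norm (ht (t + 1) i r \<omega>))\<^sup>2) * real (card {1..<q})"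
            by (rule sum_squared_le_sum_of_squares)
          finally show ?thesis unfolding m_def by (simp add: mult.commute)
        qed
        have "3 * (L * eta * ?c)\<^sup>2 = 3 * L\<^sup>2 * eta\<^sup>2 * ?c\<^sup>2" by (simp add: power_mult_distrib)
        also have "\<dots> \<le> 3 * L\<^sup>2 * eta\<^sup>2 * (m * (\<Sum>r\<in>{1..<q}. (norm (ht (t + 1) i r \<omega>))\<^sup>2))"
          using h6 by (intro mult_left_mono) auto
        finally have h7: "3 * (L * eta * ?c)\<^sup>2 \<le> 3 * L\<^sup>2 * eta\<^sup>2 * (m * (\<Sum>r\<in>{1..<q}. (norm (ht (t + 1) i r \<omega>))\<^sup>2))" .
        have h8: "3 * (L * ?a)\<^sup>2 = 3 * L\<^sup>2 * ?a\<^sup>2" by (simp add: power_mult_distrib)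
        show ?thesis using h4 h5 h7 h8 by linarith
      qed
      have intR: "integrable M (\<lambda>\<omega>. 3 * L\<^sup>2 * (norm (wl i t \<omega> - mu n w wl t \<omega>))\<^sup>2
          + 3 * L\<^sup>2 * eta\<^sup>2 * (m * (\<Sum>r\<in>{1..<q}. (norm (ht (t + 1) i r \<omega>))\<^sup>2))
          + 3 * (norm (g i (mu n w wl t \<omega>)))\<^sup>2)"
        by (intro Bochner_Integration.integrable_add integrable_mult_right Bochner_Integration.integrable_sum int_dev int_grad int_h)
      have Hle: "integral\<^sup>L M (\<lambda>\<omega>. (norm (?hh \<omega>))\<^sup>2) \<le> integral\<^sup>L M (\<lambda>\<omega>. 3 * L\<^sup>2 * (norm (wl i t \<omega> - mu n w wl t \<omega>))\<^sup>2
          + 3 * L\<^sup>2 * eta\<^sup>2 * (m * (\<Sum>r\<in>{1..<q}. (norm (ht (t + 1) i r \<omega>))\<^sup>2))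
          + 3 * (norm (g i (mu n w wl t \<omega>)))\<^sup>2)"
        by (rule integral_mono[OF int_hh intR pw])
      have Req: "integral\<^sup>L M (\<lambda>\<omega>. 3 * L\<^sup>2 * (norm (wl i t \<omega> - mu n w wl t \<omega>))\<^sup>2
          + 3 * L\<^sup>2 * eta\<^sup>2 * (m * (\<Sum>r\<in>{1..<q}. (norm (ht (t + 1) i r \<omega>))\<^sup>2))
          + 3 * (norm (g i (mu n w wl t \<omega>)))\<^sup>2) = 3 * L\<^sup>2 * D + 3 * L\<^sup>2 * eta\<^sup>2 * (m * Ssum) + 3 * Gm"
      proof -
        have i1: "integrable M (\<lambda>\<omega>. 3 * L\<^sup>2 * (norm (wl i t \<omega> - mu n w wl t \<omega>))\<^sup>2)"
          by (intro integrable_mult_right int_dev)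
        have i2: "integrable M (\<lambda>\<omega>. 3 * L\<^sup>2 * eta\<^sup>2 * (m * (\<Sum>r\<in>{1..<q}. (norm (ht (t + 1) i r \<omega>))\<^sup>2)))"
          by (intro integrable_mult_right Bochner_Integration.integrable_sum int_h)
        have i3: "integrable M (\<lambda>\<omega>. 3 * (norm (g i (mu n w wl t \<omega>)))\<^sup>2)"
          by (intro integrable_mult_right int_grad)
        have "integral\<^sup>L M (\<lambda>\<omega>. 3 * L\<^sup>2 * (norm (wl i t \<omega> - mu n w wl t \<omega>))\<^sup>2
          + 3 * L\<^sup>2 * eta\<^sup>2 * (m * (\<Sum>r\<in>{1..<q}. (norm (ht (t + 1) i r \<omega>))\<^sup>2))
          + 3 * (norm (g i (mu n w wl t \<omega>)))\<^sup>2)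
          = integral\<^sup>L M (\<lambda>\<omega>. 3 * L\<^sup>2 * (norm (wl i t \<omega> - mu n w wl t \<omega>))\<^sup>2)
          + integral\<^sup>L M (\<lambda>\<omega>. 3 * L\<^sup>2 * eta\<^sup>2 * (m * (\<Sum>r\<in>{1..<q}. (norm (ht (t + 1) i r \<omega>))\<^sup>2)))
          + integral\<^sup>L M (\<lambda>\<omega>. 3 * (norm (g i (mu n w wl t \<omega>)))\<^sup>2)"
          using i1 i2 i3 by (simp add: Bochner_Integration.integral_add Bochner_Integration.integrable_add)
        also have "integral\<^sup>L M (\<lambda>\<omega>. 3 * L\<^sup>2 * (norm (wl i t \<omega> - mu n w wl t \<omega>))\<^sup>2) = 3 * L\<^sup>2 * D"
          unfolding D_def by (rule integral_mult_right_zero)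
        also have "integral\<^sup>L M (\<lambda>\<omega>. 3 * (norm (g i (mu n w wl t \<omega>)))\<^sup>2) = 3 * Gm"
          unfolding Gm_def by (rule integral_mult_right_zero)
        also have "integral\<^sup>L M (\<lambda>\<omega>. 3 * L\<^sup>2 * eta\<^sup>2 * (m * (\<Sum>r\<in>{1..<q}. (norm (ht (t + 1) i r \<omega>))\<^sup>2)))
            = 3 * L\<^sup>2 * eta\<^sup>2 * (m * Ssum)"
        proof -
          have "integral\<^sup>L M (\<lambda>\<omega>. 3 * L\<^sup>2 * eta\<^sup>2 * (m * (\<Sum>r\<in>{1..<q}. (norm (ht (t + 1) i r \<omega>))\<^sup>2)))
             = 3 * L\<^sup>2 * eta\<^sup>2 * integral\<^sup>L M (\<lambda>\<omega>. (m * (\<Sum>r\<in>{1..<q}. (norm (ht (t + 1) i r \<omega>))\<^sup>2)))"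
            by (rule integral_mult_right_zero)
          also have "integral\<^sup>L M (\<lambda>\<omega>. (m * (\<Sum>r\<in>{1..<q}. (norm (ht (t + 1) i r \<omega>))\<^sup>2)))
             = m * integral\<^sup>L M (\<lambda>\<omega>. (\<Sum>r\<in>{1..<q}. (norm (ht (t + 1) i r \<omega>))\<^sup>2))"
            by (rule integral_mult_right_zero)
          also have "integral\<^sup>L M (\<lambda>\<omega>. (\<Sum>r\<in>{1..<q}. (norm (ht (t + 1) i r \<omega>))\<^sup>2)) = Ssum"
            unfolding Ssum_def by (rule Bochner_Integration.integral_sum) (rule int_h)
          finally show ?thesis .
        qed
        finally show ?thesis .
      qed
      show "integral\<^sup>L M (\<lambda>\<omega>. (norm (ht (t + 1) i q \<omega>))\<^sup>2) \<le> A"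
      proof (rule final_arith[where k="real K" and eta=eta and L=L and D=D and G=Gm and m=m and Ssum=Ssum and A=A and sgm="sigma\<^sup>2"
          and Xi="integral\<^sup>L M (\<lambda>\<omega>. (norm (?xi \<omega>))\<^sup>2)" and H="integral\<^sup>L M (\<lambda>\<omega>. (norm (?hh \<omega>))\<^sup>2)"])
        show "1 \<le> real K" using K by simp
        show "0 < eta" by (rule eta)
        show "0 < L" by (rule L)
        show "eta < 1 / (4 * L * real K ^ 2)" by (rule eta_small)
        show "0 \<le> D" by (rule D0)
        show "0 \<le> Gm" by (rule G0)
        show "0 \<le> m" unfolding m_def by simp
        show "m \<le> real K" unfolding m_def using q by simp
        show "0 \<le> sigma\<^sup>2" by simp
        show "Ssum \<le> m * A" by (rule Ss)
        show "A = sigma\<^sup>2 + (sigma\<^sup>2 / real K ^ 2 + 16 * L\<^sup>2 * D + 8 * Gm)" by (rule A_def)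
        show "integral\<^sup>L M (\<lambda>\<omega>. (norm (?xi \<omega>))\<^sup>2) \<le> sigma\<^sup>2" by (rule Xi_le)
        show "integral\<^sup>L M (\<lambda>\<omega>. (norm (?hh \<omega>))\<^sup>2) \<le> 3 * L\<^sup>2 * D + 3 * L\<^sup>2 * eta\<^sup>2 * (m * Ssum) + 3 * Gm"
          using Hle Req by simp
        show "integral\<^sup>L M (\<lambda>\<omega>. (norm (ht (t + 1) i q \<omega>))\<^sup>2)
           = integral\<^sup>L M (\<lambda>\<omega>. (norm (?xi \<omega>))\<^sup>2) + integral\<^sup>L M (\<lambda>\<omega>. (norm (?hh \<omega>))\<^sup>2)"
          by (rule Xeq)
      qed
    qed
  qed
  show "integral\<^sup>L M (\<lambda>\<omega>. (norm (ht (t + 1) i q \<omega>))\<^sup>2)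
      \<le> sigma\<^sup>2 + (sigma\<^sup>2 / real K ^ 2
          + 16 * L\<^sup>2 * integral\<^sup>L M (\<lambda>\<omega>. (norm (wl i t \<omega> - mu n w wl t \<omega>))\<^sup>2)
          + 8 * integral\<^sup>L M (\<lambda>\<omega>. (norm (g i (mu n w wl t \<omega>)))\<^sup>2))"
    using main[of q] q unfolding A_def D_def Gm_def by blast
qed

end
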